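(* Let $0<p\leq 1$, let $A\in\mathbb{R}^{m\times N}$ with $N=nd$, and let $x\in\mathbb{R}^N$. Let $y=Ax+e$ with $\lVert e\rVert_2\leq\varepsilon$. Let $x^k$ be a best block $k$-sparse approximation of $x$ (i.e. $x^k$ minimizes $\lVert x-g\rVert_{2,1}$ over all block $k$-sparse $g\in\mathbb{R}^N$), and let $T_0\subset\{1,\dots,n\}$ be the block support of $x^k$. Let $\tilde T\subset\{1,\dots,n\}$ be an arbitrary set, and define $\rho,\alpha\geq 0$ by $|\tilde T|=\rho k$ and $|\tilde T\cap T_0|=\alpha\rho k$. Let $0\leq\omega\leq 1$ and set $\gamma=\omega+(1-\omega)(1+\rho-2\alpha\rho)^{1-p/2}$. Suppose there exists an integer $a$ with $a\geq(1-\alpha)\rho$ and $a>1$ such that $$\delta_{ak}+\frac{a^{1-p/2}}{\gamma}\delta_{(a+1)k}<\frac{a^{1-p/2}}{\gamma}-1 .$$ Then any solution $x^\sharp$ of $$\min_{z\in\mathbb{R}^N}\sum_{i=1}^n w_i\lVert z[i]\rVert_2^p\quad\text{subject to}\quad \lVert y-Az\rVert_2\leq\varepsilon,\qquad w_i=\begin{cases}\omega,& i\in\tilde T\\ 1,& i\in\tilde T^c\end{cases}$$ satisfies $$\lVert x^\sharp-x\rVert_2\leq C_1\frac{\Big(\omega\lVert x-x^k\rVert_{2,p}^p+(1-\omega)\lVert x_{\tilde T^c\cap T_0^c}\rVert_{2,p}^p\Big)^{1/p}}{k^{1/p-1/2}}+C_2\varepsilon$$ for some positive constants $C_1,C_2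$.
   Context: Vectors $x\in\mathbb{R}^N$, $N=nd$, are split into $n$ consecutive blocks of length $d$: $x[i]=(x_{(i-1)d+1},\dots,x_{id})^T$, $i=1,\dots,n$. For $p>0$, $\lVert x\rVert_{2,p}=(\sum_{i=1}^n\lVert x[i]\rVert_2^p)^{1/p}$. A vector is block $k$-sparse if at most $k$ blocks $x[i]$ are nonzero; its block support is the set of indices $i$ with $x[i]\neq 0$. For a block index set $T$, $x_T$ denotes the vector equal to $x$ on the blocks indexed by $T$ and zero elsewhere; $T^c$ is the complement in $\{1,\dots,n\}$. For a vector $v\in\mathbb{R}^m$, $\lVert v\rVert_p^p=\sum_{i=1}^m|v_i|^p$. The block $p$-restricted isometry constant $\delta_k$ of $A$ (of order $k$) is the smallest positive number such that $(1-\delta_k)\lVert z\rVert_2^p\leq\lVert Az\rVert_p^p\leq(1+\delta_k)\lVert z\rVert_2^p$ for all block $k$-sparse $z\in\mathbb{R}^N$. *)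

theory Defs
  imports Complex_Main
begin

text \<open>Vectors in R^N (N = n*d) are functions nat => real, only indices < N matter.
  Blocks are 0-indexed: block i (i < n) consists of entries i*d + j, j < d.
  Matrices A in R^(m x N) are functions nat => nat => real (rows < m, columns < N).\<close>

definition block_norm :: "nat \<Rightarrow> (nat \<Rightarrow> real) \<Rightarrow> nat \<Rightarrow> real" where
  "block_norm d z i = sqrt (\<Sum>j<d. (z (i*d + j))^2)"

definition mixed_norm :: "nat \<Rightarrow> nat \<Rightarrow> real \<Rightarrow> (nat \<Rightarrow> real) \<Rightarrow> real" where
  "mixed_norm n d p z = (\<Sum>i<n. block_norm d z i powr p) powr (1/p)"

definition block_support :: "nat \<Rightarrow> nat \<Rightarrow> (nat \<Rightarrow> real) \<Rightarrow> nat set" where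
  "block_support n d z = {i. i < n \<and> block_norm d z i \<noteq> 0}"

definition block_sparse :: "nat \<Rightarrow> nat \<Rightarrow> nat \<Rightarrow> (nat \<Rightarrow> real) \<Rightarrow> bool" where
  "block_sparse n d k z \<longleftrightarrow> card (block_support n d z) \<le> k"

definition restrict_blocks :: "nat \<Rightarrow> nat set \<Rightarrow> (nat \<Rightarrow> real) \<Rightarrow> (nat \<Rightarrow> real)" where
  "restrict_blocks d T z = (\<lambda>j. if j div d \<in> T then z j else 0)"

definition mat_vec :: "nat \<Rightarrow> (nat \<Rightarrow> nat \<Rightarrow> real) \<Rightarrow> (nat \<Rightarrow> real) \<Rightarrow> (nat \<Rightarrow> real)" where
  "mat_vec N A z = (\<lambda>i. \<Sum>j<N. A i j * z j)"

definition norm2 :: "nat \<Rightarrow> (nat \<Rightarrow> real) \<Rightarrow> real" where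
  "norm2 m v = sqrt (\<Sum>i<m. (v i)^2)"

definition lp_pow :: "nat \<Rightarrow> real \<Rightarrow> (nat \<Rightarrow> real) \<Rightarrow> real" where
  "lp_pow m p v = (\<Sum>i<m. \<bar>v i\<bar> powr p)"

definition block_p_RIC :: "nat \<Rightarrow> nat \<Rightarrow> nat \<Rightarrow> real \<Rightarrow> (nat \<Rightarrow> nat \<Rightarrow> real) \<Rightarrow> nat \<Rightarrow> real" where
  "block_p_RIC m n d p A k = Inf {\<delta>. \<delta> > 0 \<and> (\<forall>z. block_sparse n d k z \<longrightarrow>
      (1 - \<delta>) * norm2 (n*d) z powr p \<le> lp_pow m p (mat_vec (n*d) A z) \<and>
      lp_pow m p (mat_vec (n*d) A z) \<le> (1 + \<delta>) * norm2 (n*d) z powr p)}"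

definition weighted_obj :: "nat \<Rightarrow> nat \<Rightarrow> real \<Rightarrow> real \<Rightarrow> nat set \<Rightarrow> (nat \<Rightarrow> real) \<Rightarrow> real" where
  "weighted_obj n d p \<omega> Tt z = (\<Sum>i<n. (if i \<in> Tt then \<omega> else 1) * block_norm d z i powr p)"

end

theory Submission
  imports Defs "HOL-Analysis.Analysis"
begin


lemma powr_subadd:
  fixes a b p :: real
  assumes "0 < p" "p \<le> 1" "0 \<le> a" "0 \<le> b"
  shows "(a+b) powr p \<le> a powr p + b powr p"
proof (cases "a + b = 0")
  case True then show ?thesis using assms by simp
next
  case False
  define s where "s = a + b"
  have s: "s > 0" using False assms s_def by simp
  have ha: "a/s \<le> (a/s) powr p"
  proof (cases "a = 0")
    case False
    have "(a/s) powr 1 \<le> (a/s) powr p"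
      using assms s False by (intro powr_mono') (auto simp: s_def)
    then show ?thesis using assms s by simp
  qed simp
  have hb: "b/s \<le> (b/s) powr p"
  proof (cases "b = 0")
    case False
    have "(b/s) powr 1 \<le> (b/s) powr p"
      using assms s False by (intro powr_mono') (auto simp: s_def)
    then show ?thesis using assms s by simp
  qed simp
  have "1 = a/s + b/s" using s by (simp add: s_def add_divide_distrib[symmetric])
  also have "\<dots> \<le> (a/s) powr p + (b/s) powr p" using ha hb by simp
  also have "\<dots> = (a powr p + b powr p) / s powr p"
    using assms s by (simp add: powr_divide add_divide_distrib)
  finally have "s powr p \<le> a powr p + b powr p" using s by (simp add: field_simps)
  then show ?thesis by (simp add: s_def)
qed

lemma powr_sum_subadd:
  fixes f :: "'a \<Rightarrow> real" and p :: real
  assumes "0 < p" "p \<le> 1" "\<And>i. i \<in> S \<Longrightarrow> 0 \<le> f i"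
  shows "(\<Sum>i\<in>S. f i) powr p \<le> (\<Sum>i\<in>S. f i powr p)"
  using assms(3)
proof (induction S rule: infinite_finite_induct)
  case (insert x F)
  have "(\<Sum>i\<in>insert x F. f i) powr p = (f x + (\<Sum>i\<in>F. f i)) powr p" using insert by simp
  also have "\<dots> \<le> f x powr p + (\<Sum>i\<in>F. f i) powr p"
    using insert assms by (intro powr_subadd) (auto intro: sum_nonneg)
  also have "\<dots> \<le> f x powr p + (\<Sum>i\<in>F. f i powr p)" using insert by simp
  finally show ?case using insert by simp
qed auto

lemma power_mean:
  fixes t :: "'a \<Rightarrow> real" and q :: real
  assumes "0 < q" "q \<le> 1" "finite U" "\<And>i. i \<in> U \<Longrightarrow> 0 \<le> t i"
  shows "(\<Sum>i\<in>U. t i powr q) \<le> real (card U) powr (1 - q) * (\<Sum>i\<in>U. t i) powr q"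
proof (cases "(\<Sum>i\<in>U. t i) = 0")
  case True
  then have "\<forall>i\<in>U. t i = 0" using sum_nonneg_eq_0_iff assms by blast
  then show ?thesis by simp
next
  case False
  define T where "T = (\<Sum>i\<in>U. t i)"
  have T: "T > 0" using False assms T_def by (metis order_le_neq_trans sum_nonneg)
  have U: "U \<noteq> {}" using False by auto
  define c where "c = real (card U)"
  have c: "c > 0" using U assms c_def by (simp add: card_gt_0_iff)
  define M where "M = T / c"
  have M: "M > 0" using T c M_def by simp
  have key: "t i powr q * M powr (1-q) \<le> q * t i + (1-q) * M" if "i \<in> U" for i
  proof (cases "t i = 0")
    case True then show ?thesis using assms M by simp
  next
    case False
    then have "t i > 0" using assms(4)[OF that] by (simp add: less_le)
    then show ?thesis using Youngs_inequality_0[of q "1-q" "t i" M] assms M by simp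
  qed
  have "(\<Sum>i\<in>U. t i powr q) * M powr (1-q) = (\<Sum>i\<in>U. t i powr q * M powr (1-q))"
    by (simp add: sum_distrib_right)
  also have "\<dots> \<le> (\<Sum>i\<in>U. q * t i + (1-q) * M)" using key by (rule sum_mono)
  also have "\<dots> = q * T + (1-q) * c * M"
    by (simp add: sum.distrib sum_distrib_left[symmetric] T_def c_def)
  also have "\<dots> = T" using c by (simp add: M_def field_simps)
  finally have le: "(\<Sum>i\<in>U. t i powr q) * M powr (1-q) \<le> T" .
  have "T = c * M" using c by (simp add: M_def)
  have "c powr (1-q) * T powr q = c powr (1-q) * (c powr q * M powr q)"
    using \<open>T = c * M\<close> c M by (simp add: powr_mult)
  also have "\<dots> = c * M powr q" using c by (simp add: powr_add[symmetric] mult.assoc[symmetric])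
  finally have eq: "c powr (1-q) * T powr q = c * M powr q" .
  have "T / M powr (1-q) = c * M powr q"
    using M c by (simp add: M_def powr_diff field_simps)
  moreover have "M powr (1-q) > 0" using M by simp
  ultimately have "(\<Sum>i\<in>U. t i powr q) \<le> c * M powr q"
    using le by (metis pos_le_divide_eq)
  then show ?thesis using eq by (simp add: T_def c_def)
qed



definition prec :: "(nat \<Rightarrow> real) \<Rightarrow> nat \<Rightarrow> nat \<Rightarrow> bool" where
  "prec f i j \<longleftrightarrow> f j < f i \<or> (f i = f j \<and> i < j)"

definition rk :: "(nat \<Rightarrow> real) \<Rightarrow> nat set \<Rightarrow> nat \<Rightarrow> nat" where
  "rk f S i = card {j\<in>S. prec f j i}"

definition grp :: "(nat \<Rightarrow> real) \<Rightarrow> nat set \<Rightarrow> nat \<Rightarrow> nat \<Rightarrow> nat set" where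
  "grp f S K j = {i\<in>S. rk f S i div K = j}"

lemma div_range: "0 < (K::nat) \<Longrightarrow> (l div K = j) \<longleftrightarrow> (j*K \<le> l \<and> l < j*K+K)"
  by (smt (verit, best) Euclidean_Rings.div_eq_0_iff add_cancel_left_right
    div_mult_self4 less_eq_div_iff_mult_less_eq mult.commute
    nat_add_left_cancel_less nat_le_iff_add neq0_conv)

lemma rk_lt:
  assumes "finite S" "i \<in> S" "j \<in> S" "prec f j i"
  shows "rk f S j < rk f S i"
proof -
  have "{l\<in>S. prec f l j} \<subset> {l\<in>S. prec f l i}"
    using assms by (auto simp: prec_def)
  then show ?thesis unfolding rk_def using assms(1) by (intro psubset_card_mono) auto
qed

lemma rk_less_card:
  assumes "finite S" "i \<in> S"
  shows "rk f S i < card S"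
proof -
  have "{l\<in>S. prec f l i} \<subset> S" using assms by (auto simp: prec_def)
  then show ?thesis unfolding rk_def using assms(1) by (intro psubset_card_mono) auto
qed

lemma rk_inj:
  assumes "finite S" shows "inj_on (rk f S) S"
proof (rule inj_onI)
  fix i j assume h: "i \<in> S" "j \<in> S" "rk f S i = rk f S j"
  show "i = j"
  proof (rule ccontr)
    assume "i \<noteq> j"
    then have "prec f i j \<or> prec f j i" by (auto simp: prec_def)
    then show False using rk_lt[OF assms] h by fastforce
  qed
qed

lemma rk_bij:
  assumes "finite S" shows "bij_betw (rk f S) S {..<card S}"
proof -
  have "rk f S ` S \<subseteq> {..<card S}" using rk_less_card[OF assms] by auto
  moreover have "card (rk f S ` S) = card {..<card S}"
    using card_image[OF rk_inj[OF assms]] by simp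
  ultimately have "rk f S ` S = {..<card S}"
    by (intro card_subset_eq) auto
  then show ?thesis using rk_inj[OF assms] by (simp add: bij_betw_def)
qed

lemma rk_mono:
  assumes "finite S" "i \<in> S" "j \<in> S" "rk f S i < rk f S j"
  shows "f j \<le> f i"
proof (rule ccontr)
  assume "\<not> f j \<le> f i"
  then have "prec f j i" by (auto simp: prec_def)
  have "rk f S j < rk f S i" by (rule rk_lt) (use assms \<open>prec f j i\<close> in auto)
  then show False using assms(4) by simp
qed

lemma bij_image_Collect:
  assumes "bij_betw g S T"
  shows "g ` {i\<in>S. P (g i)} = {l\<in>T. P l}"
  using assms by (auto simp: bij_betw_def)

lemma card_grp:
  assumes "finite S"
  shows "card (grp f S K j) = card {l\<in>{..<card S}. l div K = j}"
proof -
  have "card (grp f S K j) = card (rk f S ` grp f S K j)"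
    using rk_inj[OF assms] by (intro card_image[symmetric]) (auto simp: grp_def intro: inj_on_subset)
  also have "rk f S ` grp f S K j = {l\<in>{..<card S}. l div K = j}"
    unfolding grp_def by (rule bij_image_Collect[OF rk_bij[OF assms]])
  finally show ?thesis .
qed

lemma card_grp_le:
  assumes "finite S" "0 < K"
  shows "card (grp f S K j) \<le> K"
proof -
  have "{l\<in>{..<card S}. l div K = j} \<subseteq> {j*K..<j*K+K}"
  proof
    fix l assume "l \<in> {l\<in>{..<card S}. l div K = j}"
    then show "l \<in> {j*K..<j*K+K}" using div_range[OF assms(2), of l j] by auto
  qed
  then have "card {l\<in>{..<card S}. l div K = j} \<le> K"
    by (metis card_atLeastLessThan card_mono diff_add_inverse finite_atLeastLessThan)
  then show ?thesis using card_grp[OF assms(1)] by simp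
qed

lemma grp_full:
  assumes "finite S" "0 < K" "grp f S K (Suc j) \<noteq> {}"
  shows "card (grp f S K j) = K"
proof -
  obtain i where i: "i \<in> S" "rk f S i div K = Suc j" using assms(3) by (auto simp: grp_def)
  have "Suc j * K \<le> rk f S i" using i(2) assms(2)
    by (metis div_times_less_eq_dividend mult.commute)
  moreover have "rk f S i < card S" using rk_less_card[OF assms(1) i(1)] .
  ultimately have cs: "j*K + K \<le> card S" by simp
  have "{l\<in>{..<card S}. l div K = j} = {j*K..<j*K+K}"
  proof (rule set_eqI)
    fix l show "l \<in> {l\<in>{..<card S}. l div K = j} \<longleftrightarrow> l \<in> {j*K..<j*K+K}"
      using cs div_range[OF assms(2), of l j] by auto
  qed
  then show ?thesis using card_grp[OF assms(1)] by simp
qed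

lemma grp0_card:
  assumes "finite S" "U \<subseteq> S" "card U \<le> K" "0 < K"
  shows "card U \<le> card (grp f S K 0)"
proof -
  have "{l\<in>{..<card S}. l div K = 0} = {..<min (card S) K}"
  proof (rule set_eqI)
    fix l show "l \<in> {l\<in>{..<card S}. l div K = 0} \<longleftrightarrow> l \<in> {..<min (card S) K}"
      using div_range[OF assms(4), of l 0] by auto
  qed
  then have "card (grp f S K 0) = min (card S) K" using card_grp[OF assms(1)] by simp
  moreover have "card U \<le> card S" using assms by (simp add: card_mono)
  ultimately show ?thesis using assms by simp
qed

lemma grp_order:
  assumes "finite S" "0 < K" "i \<in> grp f S K j1" "i' \<in> grp f S K j2" "j2 < j1"
  shows "f i \<le> f i'"
proof -
  have "rk f S i' < rk f S i"
  proof (rule ccontr)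
    assume "\<not> rk f S i' < rk f S i"
    then have "rk f S i div K \<le> rk f S i' div K" by (simp add: div_le_mono)
    then show False using assms by (auto simp: grp_def)
  qed
  then show ?thesis using rk_mono[OF assms(1)] assms by (auto simp: grp_def)
qed

lemma swap_sum:
  fixes g :: "nat \<Rightarrow> real"
  assumes "finite U" "finite G" "card U \<le> card G"
    and "\<And>u v. u \<in> U - G \<Longrightarrow> v \<in> G - U \<Longrightarrow> g u \<le> g v"
    and "\<And>v. 0 \<le> g v"
  shows "sum g U \<le> sum g G"
proof -
  have cU: "card U = card (U \<inter> G) + card (U - G)" using assms(1)
    using card_Int_Diff by blast
  have cG: "card G = card (U \<inter> G) + card (G - U)" using assms(2)
    using card_Int_Diff by (metis Int_commute)
  have c: "card (U - G) \<le> card (G - U)" using cU cG assms(3) by simp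
  have sU: "sum g U = sum g (U \<inter> G) + sum g (U - G)" using assms(1)
    using sum.Int_Diff by blast
  have sG: "sum g G = sum g (U \<inter> G) + sum g (G - U)" using assms(2)
    using sum.Int_Diff by (metis Int_commute)
  have "sum g (U - G) \<le> sum g (G - U)"
  proof (cases "U - G = {}")
    case True
    have "sum g (U - G) = 0" by (simp add: True)
    moreover have "0 \<le> sum g (G - U)" by (intro sum_nonneg) (use assms(5) in auto)
    ultimately show ?thesis by simp
  next
    case False
    define c0 where "c0 = Max (g ` (U - G))"
    have fin: "finite (U - G)" using assms(1) by simp
    have c0in: "c0 \<in> g ` (U - G)" using False fin by (simp add: c0_def)
    have "sum g (U - G) \<le> (\<Sum>u\<in>U-G. c0)"
      using fin by (intro sum_mono) (simp add: c0_def)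
    also have "\<dots> = card (U - G) * c0" by simp
    also have "\<dots> \<le> card (G - U) * c0"
    proof -
      have "G - U \<noteq> {}"
      proof
        assume "G - U = {}"
        then have "card (U - G) = 0" using c by (metis card.empty le_zero_eq)
        then show False using False fin by simp
      qed
      then obtain v where v: "v \<in> G - U" by auto
      from c0in obtain u where u: "u \<in> U - G" "c0 = g u" by auto
      have "0 \<le> c0" using u(2) assms(5) by simp
      then show ?thesis using c by (intro mult_right_mono) auto
    qed
    also have "\<dots> = (\<Sum>v\<in>G-U. c0)" by simp
    also have "\<dots> \<le> sum g (G - U)"
      using c0in assms(4) by (intro sum_mono) auto
    finally show ?thesis .
  qed
  then show ?thesis using sU sG by simp
qed



lemma sq_powr_half: "0 \<le> (t::real) \<Longrightarrow> (t^2) powr (p/2) = t powr p"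
proof (cases "t = 0")
  case False
  assume t: "0 \<le> t"
  then have "t^2 = t powr 2" using False by (simp add: powr_numeral)
  then have "(t^2) powr (p/2) = (t powr 2) powr (p/2)" by simp
  also have "\<dots> = t powr p" by (simp add: powr_powr)
  finally show ?thesis .
qed simp

lemma sum_blocks: fixes F :: "nat \<Rightarrow> 'a::comm_monoid_add" shows "(\<Sum>l<n*d. F l) = (\<Sum>i<n. \<Sum>j<d. F (i*d+j))"
proof -
  have "(\<Sum>l<n*d. F l) = (\<Sum>i<n. sum F {i*d..<i*d+d})" using sum.nat_group[of F d n] by simp
  also have "\<dots> = (\<Sum>i<n. \<Sum>j<d. F (i*d+j))"
  proof (rule sum.cong[OF refl])
    fix i
    have "sum F {0 + i*d..<d + i*d} = (\<Sum>j\<in>{0..<d}. F (j + i*d))" by (rule sum.shift_bounds_nat_ivl)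
    then show "sum F {i*d..<i*d+d} = (\<Sum>j<d. F (i*d+j))"
      by (simp add: add.commute atLeast0LessThan)
  qed
  finally show ?thesis .
qed

lemma block_norm_L2: "block_norm d z i = L2_set (\<lambda>j. z (i*d+j)) {..<d}"
  by (simp add: block_norm_def L2_set_def)

lemma norm2_L2: "norm2 m v = L2_set v {..<m}"
  by (simp add: norm2_def L2_set_def)

lemma block_norm_nonneg: "0 \<le> block_norm d z i"
  unfolding block_norm_def by (intro real_sqrt_ge_zero sum_nonneg) simp

lemma block_norm_sq: "(block_norm d z i)^2 = (\<Sum>j<d. (z (i*d+j))^2)"
  unfolding block_norm_def by (rule real_sqrt_pow2) (intro sum_nonneg; simp)

lemma norm2_blocks: "norm2 (n*d) z = sqrt (\<Sum>i<n. (block_norm d z i)^2)"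
  unfolding norm2_def block_norm_sq sum_blocks ..

lemma block_norm_cong:
  "(\<And>j. j < d \<Longrightarrow> z (i*d+j) = z' (i*d+j)) \<Longrightarrow> block_norm d z i = block_norm d z' i"
  by (simp add: block_norm_def)

lemma div_block: "0 < d \<Longrightarrow> j < d \<Longrightarrow> (i*d+j) div d = (i::nat)"
  by simp

lemma block_norm_restrict:
  assumes "0 < d"
  shows "block_norm d (restrict_blocks d U z) i = (if i \<in> U then block_norm d z i else 0)"
  using assms by (auto simp: block_norm_def restrict_blocks_def)

lemma block_norm_triangle:
  "block_norm d (\<lambda>j. f j + g j) i \<le> block_norm d f i + block_norm d g i"
  unfolding block_norm_L2 by (rule L2_set_triangle_ineq)

lemma block_norm_neg: "block_norm d (\<lambda>j. - f j) i = block_norm d f i"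
  by (simp add: block_norm_def)

lemma block_norm_zero:
  assumes "block_norm d z i = 0" "j < d"
  shows "z (i*d+j) = 0"
proof -
  have "(\<Sum>j<d. (z (i*d+j))^2) = 0" using assms(1) by (simp add: block_norm_def sum_nonneg)
  then have "\<forall>j\<in>{..<d}. (z (i*d+j))^2 = 0" by (subst (asm) sum_nonneg_eq_0_iff) auto
  then show ?thesis using assms(2) by simp
qed

lemma norm2_triangle: "norm2 m (\<lambda>i. f i + g i) \<le> norm2 m f + norm2 m g"
  unfolding norm2_L2 by (rule L2_set_triangle_ineq)

lemma norm2_neg: "norm2 m (\<lambda>i. - f i) = norm2 m f"
  by (simp add: norm2_def)

lemma norm2_nonneg: "0 \<le> norm2 m f"
  unfolding norm2_def by (intro real_sqrt_ge_zero sum_nonneg) simp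

lemma sqrt_powr: "0 \<le> x \<Longrightarrow> sqrt x powr p = x powr (p/2)"
  by (simp add: powr_half_sqrt[symmetric] powr_powr)

lemma lp_pow_nonneg: "0 \<le> lp_pow m p v"
  by (simp add: lp_pow_def sum_nonneg)

lemma lp_pow_add:
  assumes "0 < p" "p \<le> 1"
  shows "lp_pow m p (\<lambda>i. u i + v i) \<le> lp_pow m p u + lp_pow m p v"
  unfolding lp_pow_def sum.distrib[symmetric]
proof (rule sum_mono)
  fix i
  have "\<bar>u i + v i\<bar> powr p \<le> (\<bar>u i\<bar> + \<bar>v i\<bar>) powr p"
    using assms by (intro powr_mono2) auto
  also have "\<dots> \<le> \<bar>u i\<bar> powr p + \<bar>v i\<bar> powr p" using assms by (intro powr_subadd) auto
  finally show "\<bar>u i + v i\<bar> powr p \<le> \<bar>u i\<bar> powr p + \<bar>v i\<bar> powr p" .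
qed

lemma lp_pow_neg: "lp_pow m p (\<lambda>i. - v i) = lp_pow m p v"
  by (simp add: lp_pow_def)

lemma lp_pow_sum:
  assumes "0 < p" "p \<le> 1" "finite J"
  shows "lp_pow m p (\<lambda>i. \<Sum>g\<in>J. v g i) \<le> (\<Sum>g\<in>J. lp_pow m p (v g))"
  using assms(3)
proof (induction J rule: finite_induct)
  case empty then show ?case by (simp add: lp_pow_def)
next
  case (insert x F)
  have "lp_pow m p (\<lambda>i. \<Sum>g\<in>insert x F. v g i) = lp_pow m p (\<lambda>i. v x i + (\<Sum>g\<in>F. v g i))"
    using insert by simp
  also have "\<dots> \<le> lp_pow m p (v x) + lp_pow m p (\<lambda>i. \<Sum>g\<in>F. v g i)"
    by (rule lp_pow_add[OF assms(1,2)])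
  also have "\<dots> \<le> lp_pow m p (v x) + (\<Sum>g\<in>F. lp_pow m p (v g))" using insert by simp
  finally show ?case using insert by simp
qed

lemma lp_pow_le_norm2:
  assumes "0 < p" "p \<le> 1"
  shows "lp_pow m p v \<le> real m powr (1 - p/2) * norm2 m v powr p"
proof -
  have "lp_pow m p v = (\<Sum>i<m. ((v i)^2) powr (p/2))"
    unfolding lp_pow_def by (intro sum.cong refl) (simp add: sq_powr_half[of "\<bar>_\<bar>", simplified])
  also have "\<dots> \<le> real (card {..<m}) powr (1 - p/2) * (\<Sum>i<m. (v i)^2) powr (p/2)"
    using assms by (intro power_mean) auto
  also have "(\<Sum>i<m. (v i)^2) powr (p/2) = norm2 m v powr p"
  proof -
    have "0 \<le> (\<Sum>i<m. (v i)^2)" by (intro sum_nonneg) simp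
    then show ?thesis by (simp add: norm2_def sqrt_powr)
  qed
  finally show ?thesis by simp
qed

lemma mat_vec_add: "mat_vec N A (\<lambda>j. f j + g j) i = mat_vec N A f i + mat_vec N A g i"
  by (simp add: mat_vec_def distrib_left sum.distrib)

lemma mat_vec_diff: "mat_vec N A (\<lambda>j. f j - g j) i = mat_vec N A f i - mat_vec N A g i"
  by (simp add: mat_vec_def right_diff_distrib sum_subtractf)

lemma mat_vec_sum:
  "finite J \<Longrightarrow> mat_vec N A (\<lambda>j. \<Sum>g\<in>J. F g j) i = (\<Sum>g\<in>J. mat_vec N A (F g) i)"
  by (simp add: mat_vec_def sum_distrib_left sum.swap[of _ J])

lemma mat_vec_cong: "(\<And>j. j < N \<Longrightarrow> f j = g j) \<Longrightarrow> mat_vec N A f i = mat_vec N A g i"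
  by (simp add: mat_vec_def)



lemma RIC_props:
  fixes A :: "nat \<Rightarrow> nat \<Rightarrow> real"
  assumes "0 < p" "p \<le> 1"
  shows "0 \<le> block_p_RIC m n d p A s \<and> (\<forall>z. block_sparse n d s z \<longrightarrow>
      (1 - block_p_RIC m n d p A s) * norm2 (n*d) z powr p \<le> lp_pow m p (mat_vec (n*d) A z) \<and>
      lp_pow m p (mat_vec (n*d) A z) \<le> (1 + block_p_RIC m n d p A s) * norm2 (n*d) z powr p)"
proof -
  define N where "N = n*d"
  define D where "D = {\<delta>. \<delta> > 0 \<and> (\<forall>z. block_sparse n d s z \<longrightarrow>
      (1 - \<delta>) * norm2 N z powr p \<le> lp_pow m p (mat_vec N A z) \<and>
      lp_pow m p (mat_vec N A z) \<le> (1 + \<delta>) * norm2 N z powr p)}"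
  have ric: "block_p_RIC m n d p A s = Inf D" by (simp add: block_p_RIC_def D_def N_def)
  define M where "M = (\<Sum>i<m. \<Sum>j<N. \<bar>A i j\<bar>)"
  have M0: "0 \<le> M" by (simp add: M_def sum_nonneg)
  define \<delta>0 where "\<delta>0 = real m * M powr p + 1"
  have up: "lp_pow m p (mat_vec N A z) \<le> real m * M powr p * norm2 N z powr p" for z
  proof -
    have zj: "\<bar>z j\<bar> \<le> norm2 N z" if "j < N" for j
    proof -
      have "\<bar>z j\<bar> \<le> L2_set (\<lambda>j. \<bar>z j\<bar>) {..<N}" using that by (intro member_le_L2_set) auto
      also have "\<dots> = norm2 N z" by (simp add: L2_set_def norm2_def)
      finally show ?thesis .
    qed
    have row: "\<bar>mat_vec N A z i\<bar> \<le> M * norm2 N z" if "i < m" for i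
    proof -
      have "\<bar>mat_vec N A z i\<bar> \<le> (\<Sum>j<N. \<bar>A i j\<bar> * \<bar>z j\<bar>)"
        unfolding mat_vec_def by (rule order.trans[OF sum_abs]) (simp add: abs_mult)
      also have "\<dots> \<le> (\<Sum>j<N. \<bar>A i j\<bar> * norm2 N z)"
        using zj by (intro sum_mono mult_left_mono) auto
      also have "\<dots> = (\<Sum>j<N. \<bar>A i j\<bar>) * norm2 N z" by (simp add: sum_distrib_right)
      also have "\<dots> \<le> M * norm2 N z"
      proof (intro mult_right_mono norm2_nonneg)
        show "(\<Sum>j<N. \<bar>A i j\<bar>) \<le> M" unfolding M_def
          using that by (intro member_le_sum[of i "{..<m}" "\<lambda>i. \<Sum>j<N. \<bar>A i j\<bar>"]) (auto intro: sum_nonneg)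
      qed
      finally show ?thesis .
    qed
    have "lp_pow m p (mat_vec N A z) \<le> (\<Sum>i<m. (M * norm2 N z) powr p)"
      unfolding lp_pow_def using row assms by (intro sum_mono powr_mono2) auto
    also have "\<dots> = real m * M powr p * norm2 N z powr p"
      using M0 by (simp add: powr_mult norm2_nonneg)
    finally show ?thesis .
  qed
  have d0D: "\<delta>0 \<in> D"
  proof -
    have "0 \<le> real m * M powr p" by simp
    then have "\<delta>0 > 0" unfolding \<delta>0_def by linarith
    moreover have "(1 - \<delta>0) * norm2 N z powr p \<le> lp_pow m p (mat_vec N A z)" for z
    proof -
      have "(1 - \<delta>0) * norm2 N z powr p \<le> 0" using M0
        by (intro mult_nonpos_nonneg) (auto simp: \<delta>0_def)
      then show ?thesis using lp_pow_nonneg order.trans by blast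
    qed
    moreover have "lp_pow m p (mat_vec N A z) \<le> (1 + \<delta>0) * norm2 N z powr p" for z
    proof -
      have a: "0 \<le> 2 * norm2 N z powr p" by simp
      have b: "(1 + \<delta>0) * norm2 N z powr p = 2 * norm2 N z powr p + real m * M powr p * norm2 N z powr p"
        by (simp add: \<delta>0_def algebra_simps)
      show ?thesis using up[of z] a b by linarith
    qed
    ultimately show ?thesis by (simp add: D_def)
  qed
  then have Dne: "D \<noteq> {}" by auto
  have pos: "\<And>x. x \<in> D \<Longrightarrow> 0 \<le> x" by (simp add: D_def)
  have I0: "0 \<le> Inf D" using Dne pos by (intro cInf_greatest) auto
  have main: "(1 - Inf D) * norm2 N z powr p \<le> lp_pow m p (mat_vec N A z) \<and>
      lp_pow m p (mat_vec N A z) \<le> (1 + Inf D) * norm2 N z powr p" if sp: "block_sparse n d s z" for z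
  proof -
    define X where "X = norm2 N z powr p"
    define Y where "Y = lp_pow m p (mat_vec N A z)"
    have X0: "0 \<le> X" by (simp add: X_def)
    have inD: "(1 - \<delta>) * X \<le> Y \<and> Y \<le> (1 + \<delta>) * X" if "\<delta> \<in> D" for \<delta>
      using that sp by (simp add: D_def X_def Y_def)
    show ?thesis
    proof (cases "X = 0")
      case True
      then have "Y \<le> 0" using inD[OF d0D] by simp
      then show ?thesis using True lp_pow_nonneg[of m p] by (simp add: X_def Y_def)
    next
      case False
      then have Xp: "X > 0" using X0 by simp
      have "(Y - X)/X \<le> Inf D"
      proof (rule cInf_greatest[OF Dne])
        fix \<delta> assume "\<delta> \<in> D"
        then have "Y - X \<le> \<delta> * X" using inD[of \<delta>] by (simp add: algebra_simps)
        then show "(Y - X)/X \<le> \<delta>" using Xp by (simp add: divide_le_eq)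
      qed
      then have 1: "Y \<le> (1 + Inf D) * X" using Xp by (simp add: divide_le_eq algebra_simps)
      have "(X - Y)/X \<le> Inf D"
      proof (rule cInf_greatest[OF Dne])
        fix \<delta> assume "\<delta> \<in> D"
        then have "X - Y \<le> \<delta> * X" using inD[of \<delta>] by (simp add: algebra_simps)
        then show "(X - Y)/X \<le> \<delta>" using Xp by (simp add: divide_le_eq)
      qed
      then have 2: "(1 - Inf D) * X \<le> Y" using Xp by (simp add: divide_le_eq algebra_simps)
      show ?thesis using 1 2 by (simp add: X_def Y_def)
    qed
  qed
  show ?thesis using I0 main by (simp add: ric N_def)
qed



lemma sq_powr: fixes x p :: real shows "0 \<le> x \<Longrightarrow> 0 < p \<Longrightarrow> x^2 = (x powr p) powr (2/p)"
proof (cases "x = 0")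
  case False
  assume h: "0 \<le> x" "0 < p"
  have "(x powr p) powr (2/p) = x powr 2" using h by (simp add: powr_powr)
  also have "\<dots> = x^2" using h False by (simp add: powr_numeral)
  finally show ?thesis by simp
qed simp

lemma grp_tail:
  fixes f :: "nat \<Rightarrow> real"
  assumes "finite S" "0 < K" "0 < p" "p \<le> 1" "\<And>i. 0 \<le> f i"
  shows "(\<Sum>i\<in>grp f S K (Suc j). (f i)^2) powr (p/2) \<le> real K powr (p/2 - 1) * (\<Sum>i\<in>grp f S K j. f i powr p)"
proof (cases "grp f S K (Suc j) = {}")
  case True then show ?thesis by (simp add: sum_nonneg)
next
  case False
  define G where "G = grp f S K j"
  define G1 where "G1 = grp f S K (Suc j)"
  define \<Sigma> where "\<Sigma> = (\<Sum>i\<in>G. f i powr p)"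
  have cG: "card G = K" using grp_full[OF assms(1,2) False] by (simp add: G_def)
  have finG1: "finite G1" using assms(1) by (simp add: G1_def grp_def)
  have cG1: "card G1 \<le> K" using card_grp_le[OF assms(1,2)] by (simp add: G1_def)
  define \<mu> where "\<mu> = \<Sigma> / real K"
  have \<mu>0: "0 \<le> \<mu>" by (simp add: \<mu>_def \<Sigma>_def sum_nonneg)
  have each: "(f i)^2 \<le> \<mu> powr (2/p)" if "i \<in> G1" for i
  proof -
    have "real K * f i powr p = (\<Sum>i'\<in>G. f i powr p)" using cG by simp
    also have "\<dots> \<le> \<Sigma>" unfolding \<Sigma>_def
    proof (rule sum_mono)
      fix i' assume "i' \<in> G"
      then have "f i \<le> f i'" using grp_order[OF assms(1,2)] that by (auto simp: G_def G1_def)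
      then show "f i powr p \<le> f i' powr p" using assms by (intro powr_mono2) auto
    qed
    finally have "f i powr p \<le> \<mu>" using assms(2) by (simp add: \<mu>_def field_simps)
    then have "(f i powr p) powr (2/p) \<le> \<mu> powr (2/p)" using assms by (intro powr_mono2) auto
    then show ?thesis using sq_powr[OF assms(5) assms(3), of i] by simp
  qed
  have "(\<Sum>i\<in>G1. (f i)^2) \<le> (\<Sum>i\<in>G1. \<mu> powr (2/p))" using each by (rule sum_mono)
  also have "\<dots> = real (card G1) * \<mu> powr (2/p)" by simp
  also have "\<dots> \<le> real K * \<mu> powr (2/p)" using cG1 by (intro mult_right_mono) auto
  finally have le: "(\<Sum>i\<in>G1. (f i)^2) \<le> real K * \<mu> powr (2/p)" .
  have "(\<Sum>i\<in>G1. (f i)^2) powr (p/2) \<le> (real K * \<mu> powr (2/p)) powr (p/2)"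
    using le assms(3) by (intro powr_mono2) (auto intro: sum_nonneg)
  also have "\<dots> = real K powr (p/2) * \<mu>"
    using \<mu>0 assms by (simp add: powr_mult powr_powr)
  also have "\<dots> = real K powr (p/2 - 1) * \<Sigma>"
    using assms(2) by (simp add: \<mu>_def powr_diff)
  finally show ?thesis by (simp add: G1_def \<Sigma>_def G_def)
qed

lemma grp0_swap:
  fixes f :: "nat \<Rightarrow> real"
  assumes "finite S" "0 < K" "U \<subseteq> S" "card U \<le> K" "\<And>i. 0 \<le> f i"
  shows "(\<Sum>i\<in>U. (f i)^2) \<le> (\<Sum>i\<in>grp f S K 0. (f i)^2)"
proof (rule swap_sum)
  show "finite U" using assms finite_subset by blast
  show "finite (grp f S K 0)" using assms by (simp add: grp_def)
  show "card U \<le> card (grp f S K 0)" by (rule grp0_card[OF assms(1,3,4,2)])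
  show "0 \<le> (f v)^2" for v by simp
  fix u v assume u: "u \<in> U - grp f S K 0" and v: "v \<in> grp f S K 0 - U"
  have "u \<in> grp f S K (rk f S u div K)" using u assms(3) by (auto simp: grp_def)
  moreover have "0 < rk f S u div K" using u assms(3) by (auto simp: grp_def)
  ultimately have "f u \<le> f v" using v grp_order[OF assms(1,2)] by blast
  then show "(f u)^2 \<le> (f v)^2" using assms(5) by (intro power_mono) auto
qed

lemma grp_partition:
  assumes "finite S" "card S \<le> n" "0 < K"
  shows "sum g S = (\<Sum>j<n. sum g (grp f S K j))"
proof -
  have "rk f S i div K \<in> {..<n}" if "i \<in> S" for i
    using rk_less_card[OF assms(1) that, of f] assms(2)
    by (meson div_le_dividend lessThan_iff order_le_less_trans order_less_le_trans)
  then have "(\<Sum>j<n. sum g {i\<in>S. rk f S i div K = j}) = sum g S"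
    by (intro sum.group[OF assms(1)]) auto
  then show ?thesis by (simp add: grp_def)
qed

lemma grp_sub: "grp f S K j \<subseteq> S" by (auto simp: grp_def)



lemma sum_ind: "U \<subseteq> {..<(n::nat)} \<Longrightarrow> (\<Sum>i<n. if i \<in> U then f i else 0) = sum f U"
proof -
  assume "U \<subseteq> {..<n}"
  then have "{i\<in>{..<n}. i \<in> U} = U" by auto
  then have "sum f U = sum f {i\<in>{..<n}. i \<in> U}" by (simp only:)
  also have "\<dots> = (\<Sum>i<n. if i \<in> U then f i else 0)" by (rule sum.inter_filter) simp
  finally show ?thesis by simp
qed

lemma norm2_restrict:
  assumes "0 < d" "U \<subseteq> {..<n}"
  shows "norm2 (n*d) (restrict_blocks d U z) = sqrt (\<Sum>i\<in>U. (block_norm d z i)^2)"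
proof -
  have "(\<Sum>i<n. (block_norm d (restrict_blocks d U z) i)^2) = (\<Sum>i<n. if i \<in> U then (block_norm d z i)^2 else 0)"
    using assms(1) by (intro sum.cong) (auto simp: block_norm_restrict)
  then show ?thesis using sum_ind[OF assms(2)] by (simp add: norm2_blocks)
qed

lemma sparse_restrict:
  assumes "0 < d" "U \<subseteq> {..<n}" "card U \<le> s"
  shows "block_sparse n d s (restrict_blocks d U z)"
proof -
  have "block_support n d (restrict_blocks d U z) \<subseteq> U"
    using assms(1) by (auto simp: block_support_def block_norm_restrict split: if_splits)
  moreover have "finite U" using assms(2) finite_subset by blast
  ultimately show ?thesis using assms(3) unfolding block_sparse_def
    by (meson card_mono order.trans)
qed

lemma mixed_powr: "0 < p \<Longrightarrow> mixed_norm n d p z powr p = (\<Sum>i<n. block_norm d z i powr p)"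
  by (simp add: mixed_norm_def powr_powr sum_nonneg)

lemma pow_split:
  fixes u v p :: real
  assumes "0 < p" "0 \<le> u" "0 \<le> v"
  shows "(u + v) powr (1/p) \<le> 2 powr (1/p) * (u powr (1/p) + v powr (1/p))"
proof -
  have "(u + v) powr (1/p) \<le> (2 * max u v) powr (1/p)" using assms by (intro powr_mono2) auto
  also have "\<dots> = 2 powr (1/p) * (max u v) powr (1/p)" using assms by (simp add: powr_mult)
  also have "\<dots> \<le> 2 powr (1/p) * (u powr (1/p) + v powr (1/p))"
    by (intro mult_left_mono) (auto simp: max_def)
  finally show ?thesis .
qed



lemma core:
  fixes p \<omega> \<rho> \<alpha> \<epsilon> :: real and m n d k a :: nat and A :: "nat \<Rightarrow> nat \<Rightarrow> real"
    and x e xk xs :: "nat \<Rightarrow> real" and T0 Tt :: "nat set"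
  assumes hp: "0 < p" "p \<le> 1"
    and h\<omega>: "0 \<le> \<omega>" "\<omega> \<le> 1"
    and hk: "1 \<le> k" and ha: "real a \<ge> (1 - \<alpha>) * \<rho>" "a > 1" and hd: "0 < d"
    and h\<gamma>: "\<gamma> = \<omega> + (1 - \<omega>) * (1 + \<rho> - 2 * \<alpha> * \<rho>) powr (1 - p/2)"
    and h\<delta>1: "\<delta>1 = block_p_RIC m n d p A (a*k)"
    and h\<delta>2: "\<delta>2 = block_p_RIC m n d p A ((a+1)*k)"
    and h\<kappa>: "\<kappa> = 1 - \<delta>2 - (1 + \<delta>1) * \<gamma> * real a powr (p/2 - 1)" "0 < \<kappa>"
    and he: "norm2 m e \<le> \<epsilon>"
    and hxk: "block_sparse n d k xk"
    and hT0: "T0 = block_support n d xk"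
    and hTt: "Tt \<subseteq> {..<n}" "real (card Tt) = \<rho> * real k"
      "real (card (Tt \<inter> T0)) = \<alpha> * \<rho> * real k"
    and hxs: "norm2 m (\<lambda>i. mat_vec (n*d) A x i + e i - mat_vec (n*d) A xs i) \<le> \<epsilon>"
    and hmin: "\<And>z. norm2 m (\<lambda>i. mat_vec (n*d) A x i + e i - mat_vec (n*d) A z i) \<le> \<epsilon> \<Longrightarrow>
            weighted_obj n d p \<omega> Tt xs \<le> weighted_obj n d p \<omega> Tt z"
  shows "norm2 (n*d) (\<lambda>j. xs j - x j) powr p \<le>
     ((1 + \<gamma> * real a powr (p/2 - 1)) * real m powr (1 - p/2) * 2 powr p / \<kappa>) * \<epsilon> powr p
     + ((1 + \<gamma> * real a powr (p/2 - 1)) * 2 * (1 + \<delta>1) * real (a*k) powr (p/2 - 1) / \<kappa>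
        + 2 * real (a*k) powr (p/2 - 1)) *
       (\<omega> * mixed_norm n d p (\<lambda>j. x j - xk j) powr p
          + (1 - \<omega>) * mixed_norm n d p (restrict_blocks d (- Tt \<inter> - T0) x) powr p)"
proof -
  define N where "N = n*d"
  define h where "h = (\<lambda>j. xs j - x j)"
  define b where "b = block_norm d h"
  have b0: "\<And>i. 0 \<le> b i" by (simp add: b_def block_norm_nonneg)
  define K where "K = a*k"
  have K0: "0 < K" using hk ha by (simp add: K_def)
  have T0n: "T0 \<subseteq> {..<n}" by (auto simp: hT0 block_support_def)
  have finT0: "finite T0" using T0n finite_subset by blast
  have cT0: "card T0 \<le> k" using hxk hT0 by (simp add: block_sparse_def)
  define S where "S = {..<n} - T0"
  have finS: "finite S" by (simp add: S_def)
  have cS: "card S \<le> n" by (simp add: S_def card_Diff_subset finT0 T0n)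
  define G where "G = grp b S K"
  define T01 where "T01 = T0 \<union> G 0"
  define Q where "Q = (\<lambda>U. \<Sum>i\<in>U. (b i)^2)"
  define P where "P = (\<lambda>U. \<Sum>i\<in>U. b i powr p)"
  define Sym where "Sym = (T0 - Tt) \<union> (Tt - T0)"
  define X where "X = mixed_norm n d p (\<lambda>j. x j - xk j) powr p"
  define Y where "Y = mixed_norm n d p (restrict_blocks d (- Tt \<inter> - T0) x) powr p"
  define R where "R = \<omega> * X + (1 - \<omega>) * Y"
  have GS: "\<And>j. G j \<subseteq> S" by (simp add: G_def grp_sub)
  have Gn: "\<And>j. G j \<subseteq> {..<n}" using GS by (auto simp: S_def)
  have finG: "\<And>j. finite (G j)" using GS finS finite_subset by blast
  have T01n: "T01 \<subseteq> {..<n}" using T0n Gn by (auto simp: T01_def)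
  have disj: "T0 \<inter> G 0 = {}" using GS by (auto simp: S_def)
  have cG0: "card (G 0) \<le> K" using card_grp_le[OF finS K0] by (simp add: G_def)
  have cT01: "card T01 \<le> (a+1)*k"
    using card_Un_le[of T0 "G 0"] cT0 cG0 by (simp add: T01_def K_def)
  have Q01: "Q T01 = Q T0 + Q (G 0)"
    using disj finT0 finG by (simp add: Q_def T01_def sum.union_disjoint)
  have Qnn: "\<And>U. 0 \<le> Q U" by (simp add: Q_def sum_nonneg)
  have Pnn: "\<And>U. 0 \<le> P U" by (simp add: P_def sum_nonneg)
  have X0: "0 \<le> X" and Y0: "0 \<le> Y" by (simp_all add: X_def Y_def)
  have R0: "0 \<le> R" using h\<omega> X0 Y0 by (simp add: R_def)
  have Symn: "Sym \<subseteq> {..<n}" using T0n hTt(1) by (auto simp: Sym_def)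
  have Sn: "S \<subseteq> {..<n}" by (auto simp: S_def)
  have cone: "P S \<le> \<omega> * P T0 + (1 - \<omega>) * P Sym + 2 * R"
  proof -
    define c where "c = block_norm d xs"
    define \<beta> where "\<beta> = block_norm d x"
    define w where "w = (\<lambda>i. if i \<in> Tt then \<omega> else 1)"
    have f1: "\<beta> i powr p \<le> c i powr p + b i powr p" for i
    proof -
      have "\<beta> i = block_norm d (\<lambda>j. xs j + - h j) i" by (simp add: \<beta>_def h_def)
      also have "\<dots> \<le> block_norm d xs i + block_norm d (\<lambda>j. - h j) i" by (rule block_norm_triangle)
      also have "\<dots> = c i + b i" by (simp add: c_def b_def block_norm_neg)
      finally have "\<beta> i powr p \<le> (c i + b i) powr p" using hp
        by (intro powr_mono2) (auto simp: \<beta>_def block_norm_nonneg)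
      also have "\<dots> \<le> c i powr p + b i powr p" using hp b0
        by (intro powr_subadd) (auto simp: c_def block_norm_nonneg)
      finally show ?thesis .
    qed
    have f2: "b i powr p \<le> c i powr p + \<beta> i powr p" for i
    proof -
      have "b i = block_norm d (\<lambda>j. xs j + - x j) i" by (simp add: b_def h_def)
      also have "\<dots> \<le> block_norm d xs i + block_norm d (\<lambda>j. - x j) i" by (rule block_norm_triangle)
      also have "\<dots> = c i + \<beta> i" by (simp add: c_def \<beta>_def block_norm_neg)
      finally have "b i powr p \<le> (c i + \<beta> i) powr p" using hp b0
        by (intro powr_mono2) auto
      also have "\<dots> \<le> c i powr p + \<beta> i powr p" using hp
        by (intro powr_subadd) (auto simp: c_def \<beta>_def block_norm_nonneg)
      finally show ?thesis .
    qed
    have obj: "(\<Sum>i<n. w i * c i powr p) \<le> (\<Sum>i<n. w i * \<beta> i powr p)"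
    proof -
      have "norm2 m (\<lambda>i. mat_vec (n*d) A x i + e i - mat_vec (n*d) A x i) \<le> \<epsilon>" using he by simp
      from hmin[OF this] show ?thesis by (simp add: weighted_obj_def w_def c_def \<beta>_def)
    qed
    define L where "L i = (if i \<in> S then b i powr p else 0) - \<omega> * (if i \<in> T0 then b i powr p else 0)
       - (1 - \<omega>) * (if i \<in> Sym then b i powr p else 0) - 2 * \<omega> * (if i \<in> S then \<beta> i powr p else 0)
       - 2 * (1 - \<omega>) * (if i \<in> S - Tt then \<beta> i powr p else 0)" for i
    have pt: "L i \<le> w i * c i powr p - w i * \<beta> i powr p" if "i < n" for i
    proof -
      have m1: "\<omega> * \<beta> i powr p \<le> \<omega> * c i powr p + \<omega> * b i powr p"
        using mult_left_mono[OF f1[of i] h\<omega>(1)] by (simp add: algebra_simps)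
      have m2: "\<omega> * b i powr p \<le> \<omega> * c i powr p + \<omega> * \<beta> i powr p"
        using mult_left_mono[OF f2[of i] h\<omega>(1)] by (simp add: algebra_simps)
      show ?thesis using that f1[of i] f2[of i] m1 m2
        by (auto simp: L_def w_def S_def Sym_def algebra_simps)
    qed
    have "(\<Sum>i<n. L i) \<le> (\<Sum>i<n. w i * c i powr p - w i * \<beta> i powr p)"
      using pt by (intro sum_mono) auto
    also have "\<dots> \<le> 0" using obj by (simp add: sum_subtractf)
    finally have Lle: "(\<Sum>i<n. L i) \<le> 0" .
    have Leq: "(\<Sum>i<n. L i) = P S - \<omega> * P T0 - (1 - \<omega>) * P Sym - 2 * \<omega> * (\<Sum>i\<in>S. \<beta> i powr p)
        - 2 * (1 - \<omega>) * (\<Sum>i\<in>S - Tt. \<beta> i powr p)"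
    proof -
      have "(\<Sum>i<n. L i) = (\<Sum>i<n. if i \<in> S then b i powr p else 0) - \<omega> * (\<Sum>i<n. if i \<in> T0 then b i powr p else 0)
       - (1 - \<omega>) * (\<Sum>i<n. if i \<in> Sym then b i powr p else 0) - 2 * \<omega> * (\<Sum>i<n. if i \<in> S then \<beta> i powr p else 0)
       - 2 * (1 - \<omega>) * (\<Sum>i<n. if i \<in> S - Tt then \<beta> i powr p else 0)"
        unfolding L_def by (simp only: sum_subtractf sum_distrib_left)
      also have "\<dots> = P S - \<omega> * P T0 - (1 - \<omega>) * P Sym - 2 * \<omega> * (\<Sum>i\<in>S. \<beta> i powr p)
        - 2 * (1 - \<omega>) * (\<Sum>i\<in>S - Tt. \<beta> i powr p)"
      proof -
        have STn: "S - Tt \<subseteq> {..<n}" using Sn by auto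
        show ?thesis unfolding sum_ind[OF Sn] sum_ind[OF T0n] sum_ind[OF Symn] sum_ind[OF STn] P_def ..
      qed
      finally show ?thesis .
    qed
    have bX: "(\<Sum>i\<in>S. \<beta> i powr p) \<le> X"
    proof -
      have "(\<Sum>i\<in>S. \<beta> i powr p) = (\<Sum>i\<in>S. block_norm d (\<lambda>j. x j - xk j) i powr p)"
      proof (rule sum.cong[OF refl])
        fix i assume "i \<in> S"
        then have "block_norm d xk i = 0" by (auto simp: S_def hT0 block_support_def)
        then have "block_norm d (\<lambda>j. x j - xk j) i = \<beta> i"
          unfolding \<beta>_def by (intro block_norm_cong) (simp add: block_norm_zero)
        then show "\<beta> i powr p = block_norm d (\<lambda>j. x j - xk j) i powr p" by simp
      qed
      also have "\<dots> \<le> (\<Sum>i<n. block_norm d (\<lambda>j. x j - xk j) i powr p)"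
        using Sn by (intro sum_mono2) auto
      also have "\<dots> = X" using hp by (simp add: X_def mixed_powr)
      finally show ?thesis .
    qed
    have bY: "(\<Sum>i\<in>S - Tt. \<beta> i powr p) = Y"
    proof -
      have "Y = (\<Sum>i<n. block_norm d (restrict_blocks d (- Tt \<inter> - T0) x) i powr p)"
        using hp by (simp add: Y_def mixed_powr)
      also have "\<dots> = (\<Sum>i<n. if i \<in> S - Tt then \<beta> i powr p else 0)"
        using hd hp by (intro sum.cong) (auto simp: block_norm_restrict \<beta>_def S_def)
      also have "\<dots> = (\<Sum>i\<in>S - Tt. \<beta> i powr p)" using Sn by (intro sum_ind) auto
      finally show ?thesis by simp
    qed
    have "\<omega> * (\<Sum>i\<in>S. \<beta> i powr p) \<le> \<omega> * X" using bX h\<omega> by (intro mult_left_mono)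
    then have "2 * \<omega> * (\<Sum>i\<in>S. \<beta> i powr p) \<le> 2 * \<omega> * X" by simp
    then show ?thesis using Lle Leq bY by (simp add: R_def algebra_simps)
  qed
  have PU: "P U \<le> real (card U) powr (1 - p/2) * Q U powr (p/2)" if "finite U" for U
  proof -
    have "P U = (\<Sum>i\<in>U. ((b i)^2) powr (p/2))" unfolding P_def
      by (intro sum.cong refl) (simp add: sq_powr_half b0)
    also have "\<dots> \<le> real (card U) powr (1 - p/2) * (\<Sum>i\<in>U. (b i)^2) powr (p/2)"
      using hp that by (intro power_mean) auto
    finally show ?thesis by (simp add: Q_def)
  qed
  define Z where "Z = Q T01 powr (p/2)"
  have Z0: "0 \<le> Z" by (simp add: Z_def)
  have QT0: "Q T0 \<le> Q T01" using Q01 Qnn[of "G 0"] by simp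
  have kpos: "0 < real k" using hk by simp
  have PT0: "P T0 \<le> real k powr (1 - p/2) * Z"
  proof -
    have "P T0 \<le> real (card T0) powr (1 - p/2) * Q T0 powr (p/2)" using PU[OF finT0] .
    also have "\<dots> \<le> real k powr (1 - p/2) * Z" unfolding Z_def
      using cT0 QT0 hp Qnn by (intro mult_mono powr_mono2) auto
    finally show ?thesis .
  qed
  have finTt: "finite Tt" using hTt(1) finite_subset by blast
  have cTtT0: "real (card (Tt - T0)) = \<rho> * real k - \<alpha> * \<rho> * real k"
    using card_Int_Diff[OF finTt, of T0] hTt by simp
  have cT0Tt: "real (card (T0 - Tt)) = real (card T0) - \<alpha> * \<rho> * real k"
    using card_Int_Diff[OF finT0, of Tt] hTt by (simp add: Int_commute)
  have cSym: "real (card Sym) \<le> (1 + \<rho> - 2 * \<alpha> * \<rho>) * real k"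
  proof -
    have "card Sym = card (T0 - Tt) + card (Tt - T0)" unfolding Sym_def
      using finT0 finTt by (intro card_Un_disjoint) auto
    then show ?thesis using cTtT0 cT0Tt cT0 by (simp add: algebra_simps)
  qed
  define E where "E = 1 + \<rho> - 2 * \<alpha> * \<rho>"
  have E0: "0 \<le> E"
  proof -
    have "0 \<le> E * real k" using cSym of_nat_0_le_iff[of "card Sym"] unfolding E_def by linarith
    then show ?thesis using kpos by (simp add: zero_le_mult_iff)
  qed
  have cU: "card (Tt - T0) \<le> K"
  proof -
    have "real (card (Tt - T0)) = (1 - \<alpha>) * \<rho> * real k" using cTtT0 by (simp add: algebra_simps)
    also have "\<dots> \<le> real a * real k" using ha(1) kpos by (intro mult_right_mono) auto
    finally show ?thesis by (simp add: K_def flip: of_nat_mult)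
  qed
  have QSym: "Q Sym \<le> Q T01"
  proof -
    have "Q Sym = Q (T0 - Tt) + Q (Tt - T0)" unfolding Q_def Sym_def
      using finT0 finTt by (intro sum.union_disjoint) auto
    also have "Q (T0 - Tt) \<le> Q T0" unfolding Q_def using finT0 by (intro sum_mono2) auto
    also have "Q (Tt - T0) \<le> Q (G 0)" unfolding Q_def G_def
      using hTt(1) by (intro grp0_swap[OF finS K0 _ cU] b0) (auto simp: S_def)
    finally show ?thesis using Q01 by simp
  qed
  have PSym: "P Sym \<le> (E * real k) powr (1 - p/2) * Z"
  proof -
    have finSym: "finite Sym" using finT0 finTt by (simp add: Sym_def)
    have "P Sym \<le> real (card Sym) powr (1 - p/2) * Q Sym powr (p/2)" using PU[OF finSym] .
    also have "\<dots> \<le> (E * real k) powr (1 - p/2) * Z" unfolding Z_def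
      using cSym QSym hp Qnn by (intro mult_mono powr_mono2) (auto simp: E_def)
    finally show ?thesis .
  qed
  have \<gamma>k: "\<omega> * real k powr (1 - p/2) + (1 - \<omega>) * (E * real k) powr (1 - p/2) = \<gamma> * real k powr (1 - p/2)"
  proof -
    have "(E * real k) powr (1 - p/2) = E powr (1 - p/2) * real k powr (1 - p/2)"
      using E0 kpos by (simp add: powr_mult)
    moreover have "\<gamma> = \<omega> + (1 - \<omega>) * E powr (1 - p/2)" by (simp add: h\<gamma> E_def)
    ultimately show ?thesis by (simp only:) (simp add: algebra_simps)
  qed
  have \<gamma>0: "0 \<le> \<gamma>" using h\<omega> by (simp add: h\<gamma>)
  have cone2: "P S \<le> \<gamma> * real k powr (1 - p/2) * Z + 2 * R"
  proof -
    have "\<omega> * P T0 \<le> \<omega> * (real k powr (1 - p/2) * Z)" using PT0 h\<omega> by (intro mult_left_mono)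
    moreover have "(1 - \<omega>) * P Sym \<le> (1 - \<omega>) * ((E * real k) powr (1 - p/2) * Z)"
      using PSym h\<omega> by (intro mult_left_mono) auto
    ultimately have "P S \<le> (\<omega> * real k powr (1 - p/2) + (1 - \<omega>) * (E * real k) powr (1 - p/2)) * Z + 2 * R"
      using cone by (simp add: algebra_simps)
    then show ?thesis using \<gamma>k by simp
  qed
  define Ka where "Ka = real K powr (p/2 - 1)"
  have Ka0: "0 \<le> Ka" by (simp add: Ka_def)
  have Kak: "Ka * (\<gamma> * real k powr (1 - p/2)) = \<gamma> * real a powr (p/2 - 1)"
  proof -
    have "Ka * real k powr (1 - p/2) = real a powr (p/2 - 1) * (real k powr (p/2 - 1) * real k powr (1 - p/2))"
      by (simp add: Ka_def K_def powr_mult)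
    also have "real k powr (p/2 - 1) * real k powr (1 - p/2) = 1" using kpos by (simp add: powr_add[symmetric])
    finally show ?thesis by (simp add: algebra_simps)
  qed
  define ga where "ga = \<gamma> * real a powr (p/2 - 1)"
  have ga0: "0 \<le> ga" using \<gamma>0 by (simp add: ga_def)
  have KaPS: "Ka * P S \<le> ga * Z + 2 * Ka * R"
  proof -
    have "Ka * P S \<le> Ka * (\<gamma> * real k powr (1 - p/2) * Z + 2 * R)" using cone2 Ka0 by (intro mult_left_mono)
    also have "\<dots> = Ka * (\<gamma> * real k powr (1 - p/2)) * Z + 2 * Ka * R" by (simp add: algebra_simps)
    finally show ?thesis using Kak by (simp add: ga_def)
  qed
  have tl: "(\<Sum>g<n. Q (G (Suc g)) powr (p/2)) \<le> Ka * P S"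
  proof -
    have "(\<Sum>g<n. Q (G (Suc g)) powr (p/2)) \<le> (\<Sum>g<n. Ka * P (G g))"
      unfolding Q_def P_def G_def Ka_def by (intro sum_mono grp_tail[OF finS K0 hp b0])
    also have "\<dots> = Ka * (\<Sum>g<n. P (G g))" by (simp add: sum_distrib_left)
    also have "(\<Sum>g<n. P (G g)) = P S" unfolding P_def G_def by (rule grp_partition[OF finS cS K0, symmetric])
    finally show ?thesis .
  qed
  define r where "r = (\<lambda>i. rk b S i div K)"
  have rS: "r i < n" if "i \<in> S" for i
  proof -
    have "rk b S i div K \<le> rk b S i" by (rule div_le_dividend)
    then show ?thesis using rk_less_card[OF finS that, of b] cS unfolding r_def by linarith
  qed
  define H where "H = (\<lambda>g. restrict_blocks d (G (Suc g)) h)"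
  have dec: "h j = restrict_blocks d T01 h j + (\<Sum>g<n. H g j)" if "j < N" for j
  proof -
    define i where "i = j div d"
    have "i < n" using that hd by (simp add: i_def N_def less_mult_imp_div_less)
    have Hg: "H g j = (if g = r i - 1 then (if i \<in> S \<and> r i \<noteq> 0 then h j else 0) else 0)" for g
      by (auto simp: H_def restrict_blocks_def G_def grp_def r_def i_def[symmetric])
    have sH: "(\<Sum>g<n. H g j) = (if i \<in> S \<and> r i \<noteq> 0 then h j else 0)"
    proof -
      have "(\<Sum>g<n. H g j) = (if r i - 1 \<in> {..<n} then (if i \<in> S \<and> r i \<noteq> 0 then h j else 0) else 0)"
        unfolding Hg by (rule sum.delta) simp
      then show ?thesis using rS[of i] by auto
    qed
    have T01i: "i \<in> T01 \<longleftrightarrow> i \<in> T0 \<or> (i \<in> S \<and> r i = 0)"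
      by (auto simp: T01_def G_def grp_def r_def)
    show ?thesis using \<open>i < n\<close> unfolding sH
      by (auto simp: restrict_blocks_def i_def[symmetric] T01i S_def)
  qed
  have Ah01: "mat_vec N A (restrict_blocks d T01 h) i' = mat_vec N A h i' + (\<Sum>g<n. - mat_vec N A (H g) i')" for i'
  proof -
    have "mat_vec N A h i' = mat_vec N A (\<lambda>j. restrict_blocks d T01 h j + (\<Sum>g<n. H g j)) i'"
      using dec by (intro mat_vec_cong) auto
    also have "\<dots> = mat_vec N A (restrict_blocks d T01 h) i' + (\<Sum>g<n. mat_vec N A (H g) i')"
      by (simp add: mat_vec_add mat_vec_sum)
    finally show ?thesis by (simp add: sum_negf)
  qed
  have lp1: "lp_pow m p (mat_vec N A (restrict_blocks d T01 h)) \<le>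
       lp_pow m p (mat_vec N A h) + (\<Sum>g<n. lp_pow m p (mat_vec N A (H g)))"
  proof -
    have "lp_pow m p (mat_vec N A (restrict_blocks d T01 h)) =
        lp_pow m p (\<lambda>i'. mat_vec N A h i' + (\<Sum>g<n. - mat_vec N A (H g) i'))"
      using Ah01 by presburger
    also have "\<dots> \<le> lp_pow m p (mat_vec N A h) + lp_pow m p (\<lambda>i'. \<Sum>g<n. - mat_vec N A (H g) i')"
      by (rule lp_pow_add[OF hp])
    also have "lp_pow m p (\<lambda>i'. \<Sum>g<n. - mat_vec N A (H g) i') \<le> (\<Sum>g<n. lp_pow m p (\<lambda>i'. - mat_vec N A (H g) i'))"
      by (rule lp_pow_sum[OF hp]) simp
    finally show ?thesis by (simp add: lp_pow_neg)
  qed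
  note ric1 = RIC_props[OF hp, of m n d A "a*k"]
  note ric2 = RIC_props[OF hp, of m n d A "(a+1)*k"]
  have d10: "0 \<le> \<delta>1" using ric1 h\<delta>1 by simp
  have nr: "norm2 N (restrict_blocks d U h) powr p = Q U powr (p/2)" if "U \<subseteq> {..<n}" for U
    unfolding N_def norm2_restrict[OF hd that] Q_def b_def
    by (rule sqrt_powr) (intro sum_nonneg; simp)
  have low: "(1 - \<delta>2) * Z \<le> lp_pow m p (mat_vec N A (restrict_blocks d T01 h))"
  proof -
    have "(1 - \<delta>2) * norm2 N (restrict_blocks d T01 h) powr p \<le> lp_pow m p (mat_vec N A (restrict_blocks d T01 h))"
      using conjunct2[OF ric2, rule_format, OF sparse_restrict[OF hd T01n cT01, of h]]
      by (simp add: h\<delta>2 N_def)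
    then show ?thesis using nr[OF T01n] by (simp add: Z_def)
  qed
  have upg: "lp_pow m p (mat_vec N A (H g)) \<le> (1 + \<delta>1) * Q (G (Suc g)) powr (p/2)" for g
  proof -
    have "card (G (Suc g)) \<le> a * k" using card_grp_le[OF finS K0] by (simp add: G_def K_def)
    then have "lp_pow m p (mat_vec N A (H g)) \<le> (1 + \<delta>1) * norm2 N (H g) powr p"
      using conjunct2[OF ric1, rule_format, OF sparse_restrict[OF hd Gn, of "Suc g" "a*k" h]]
      by (simp add: h\<delta>1 N_def H_def)
    then show ?thesis using nr[OF Gn] by (simp add: H_def)
  qed
  have eps0: "0 \<le> \<epsilon>" using he norm2_nonneg order_trans by blast
  define E0 where "E0 = real m powr (1 - p/2) * 2 powr p * \<epsilon> powr p"
  have lpAh: "lp_pow m p (mat_vec N A h) \<le> E0"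
  proof -
    have eq: "mat_vec N A h = (\<lambda>i. e i + - (mat_vec (n*d) A x i + e i - mat_vec (n*d) A xs i))"
      by (rule ext) (simp add: h_def N_def mat_vec_diff)
    have "norm2 m (mat_vec N A h) \<le> norm2 m e + norm2 m (\<lambda>i. - (mat_vec (n*d) A x i + e i - mat_vec (n*d) A xs i))"
      unfolding eq by (rule norm2_triangle)
    also have "\<dots> \<le> 2 * \<epsilon>" using he hxs unfolding norm2_neg[of m "\<lambda>i. mat_vec (n*d) A x i + e i - mat_vec (n*d) A xs i"] by linarith
    finally have n2: "norm2 m (mat_vec N A h) \<le> 2 * \<epsilon>" .
    have "lp_pow m p (mat_vec N A h) \<le> real m powr (1 - p/2) * norm2 m (mat_vec N A h) powr p"
      by (rule lp_pow_le_norm2[OF hp])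
    also have "\<dots> \<le> real m powr (1 - p/2) * (2 * \<epsilon>) powr p"
      using n2 hp by (intro mult_left_mono powr_mono2) (auto simp: norm2_nonneg)
    also have "\<dots> = E0" using eps0 by (simp add: E0_def powr_mult)
    finally show ?thesis .
  qed
  have sumQ: "(\<Sum>g<n. lp_pow m p (mat_vec N A (H g))) \<le> (1 + \<delta>1) * (Ka * P S)"
  proof -
    have "(\<Sum>g<n. lp_pow m p (mat_vec N A (H g))) \<le> (\<Sum>g<n. (1 + \<delta>1) * Q (G (Suc g)) powr (p/2))"
      using upg by (rule sum_mono)
    also have "\<dots> = (1 + \<delta>1) * (\<Sum>g<n. Q (G (Suc g)) powr (p/2))" by (simp add: sum_distrib_left)
    also have "\<dots> \<le> (1 + \<delta>1) * (Ka * P S)" using tl d10 by (intro mult_left_mono) auto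
    finally show ?thesis .
  qed
  have mainZ: "\<kappa> * Z \<le> E0 + 2 * (1 + \<delta>1) * Ka * R"
  proof -
    have "(1 + \<delta>1) * (Ka * P S) \<le> (1 + \<delta>1) * (ga * Z + 2 * Ka * R)"
      using KaPS d10 by (intro mult_left_mono) auto
    then have "(1 - \<delta>2) * Z \<le> E0 + (1 + \<delta>1) * (ga * Z + 2 * Ka * R)"
      using low lp1 lpAh sumQ by linarith
    moreover have "\<kappa> * Z = (1 - \<delta>2) * Z - (1 + \<delta>1) * (ga * Z)"
      by (simp add: h\<kappa>(1) ga_def algebra_simps)
    moreover have "(1 + \<delta>1) * (ga * Z + 2 * Ka * R) = (1 + \<delta>1) * (ga * Z) + 2 * (1 + \<delta>1) * Ka * R"
      by (simp add: algebra_simps)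
    ultimately show ?thesis by linarith
  qed
  have Zb: "Z \<le> (E0 + 2 * (1 + \<delta>1) * Ka * R) / \<kappa>"
    using mainZ h\<kappa>(2) by (simp add: pos_le_divide_eq mult.commute)
  have normsq: "norm2 N h powr p \<le> Z + Ka * P S"
  proof -
    have QS: "Q S = Q (G 0) + (\<Sum>g<n. Q (G (Suc g)))"
    proof -
      have "Q S = (\<Sum>j<Suc n. Q (G j))" unfolding Q_def G_def
        using cS by (intro grp_partition[OF finS _ K0]) auto
      then show ?thesis by (simp only: sum.lessThan_Suc_shift)
    qed
    have "norm2 N h = sqrt (Q {..<n})" by (simp add: N_def norm2_blocks Q_def b_def)
    moreover have "Q {..<n} = Q T0 + Q S" unfolding Q_def S_def
      using T0n by (metis finite_lessThan sum.subset_diff add.commute)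
    ultimately have "norm2 N h = sqrt (Q T01 + (\<Sum>g<n. Q (G (Suc g))))" using QS Q01 by simp
    then have "norm2 N h powr p = (Q T01 + (\<Sum>g<n. Q (G (Suc g)))) powr (p/2)"
      by (simp add: sqrt_powr Qnn sum_nonneg)
    also have "\<dots> \<le> Z + (\<Sum>g<n. Q (G (Suc g))) powr (p/2)"
      unfolding Z_def using hp Qnn by (intro powr_subadd) (auto intro: sum_nonneg)
    also have "(\<Sum>g<n. Q (G (Suc g))) powr (p/2) \<le> (\<Sum>g<n. Q (G (Suc g)) powr (p/2))"
      using hp Qnn by (intro powr_sum_subadd) auto
    finally show ?thesis using tl by linarith
  qed
  have final: "norm2 N h powr p \<le> (1 + ga) * ((E0 + 2 * (1 + \<delta>1) * Ka * R) / \<kappa>) + 2 * Ka * R"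
  proof -
    have "(1 + ga) * Z \<le> (1 + ga) * ((E0 + 2 * (1 + \<delta>1) * Ka * R) / \<kappa>)"
      using Zb ga0 by (intro mult_left_mono) auto
    then show ?thesis using normsq KaPS by (simp add: algebra_simps)
  qed
  have eqf: "(1 + ga) * ((E0 + 2 * (1 + \<delta>1) * Ka * R) / \<kappa>) + 2 * Ka * R =
     ((1 + \<gamma> * real a powr (p/2 - 1)) * real m powr (1 - p/2) * 2 powr p / \<kappa>) * \<epsilon> powr p
     + ((1 + \<gamma> * real a powr (p/2 - 1)) * 2 * (1 + \<delta>1) * real (a*k) powr (p/2 - 1) / \<kappa>
        + 2 * real (a*k) powr (p/2 - 1)) * R"
    using h\<kappa>(2) by (simp add: ga_def E0_def Ka_def K_def field_simps)
  show ?thesis using final eqf by (simp add: N_def h_def R_def X_def Y_def)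
qed


theorem theorem1:
  fixes p \<omega> \<rho> \<alpha> :: real and m n d k a :: nat and A :: "nat \<Rightarrow> nat \<Rightarrow> real"
  assumes hp: "0 < p" "p \<le> 1"
    and h\<omega>: "0 \<le> \<omega>" "\<omega> \<le> 1"
    and h\<rho>\<alpha>: "0 \<le> \<rho>" "0 \<le> \<alpha>"
    and hk: "1 \<le> k"
    and ha: "real a \<ge> (1 - \<alpha>) * \<rho>" "a > 1"
    and hRIP: "let \<gamma> = \<omega> + (1 - \<omega>) * (1 + \<rho> - 2 * \<alpha> * \<rho>) powr (1 - p/2) in
      block_p_RIC m n d p A (a*k) + real a powr (1 - p/2) / \<gamma> * block_p_RIC m n d p A ((a+1)*k)
        < real a powr (1 - p/2) / \<gamma> - 1"
  shows "\<exists>C1>0. \<exists>C2>0. \<forall>x e \<epsilon> xk T0 Tt xs.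
      norm2 m e \<le> \<epsilon>
      \<and> block_sparse n d k xk
      \<and> (\<forall>g. block_sparse n d k g \<longrightarrow>
            mixed_norm n d 1 (\<lambda>j. x j - xk j) \<le> mixed_norm n d 1 (\<lambda>j. x j - g j))
      \<and> T0 = block_support n d xk
      \<and> Tt \<subseteq> {..<n}
      \<and> real (card Tt) = \<rho> * real k
      \<and> real (card (Tt \<inter> T0)) = \<alpha> * \<rho> * real k
      \<and> norm2 m (\<lambda>i. mat_vec (n*d) A x i + e i - mat_vec (n*d) A xs i) \<le> \<epsilon>
      \<and> (\<forall>z. norm2 m (\<lambda>i. mat_vec (n*d) A x i + e i - mat_vec (n*d) A z i) \<le> \<epsilon> \<longrightarrow>
            weighted_obj n d p \<omega> Tt xs \<le> weighted_obj n d p \<omega> Tt z)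
      \<longrightarrow> norm2 (n*d) (\<lambda>j. xs j - x j)
          \<le> C1 * (\<omega> * mixed_norm n d p (\<lambda>j. x j - xk j) powr p
                  + (1 - \<omega>) * mixed_norm n d p (restrict_blocks d (- Tt \<inter> - T0) x) powr p) powr (1/p)
              / real k powr (1/p - 1/2)
            + C2 * \<epsilon>"
  proof -
  define \<gamma> where "\<gamma> = \<omega> + (1 - \<omega>) * (1 + \<rho> - 2 * \<alpha> * \<rho>) powr (1 - p/2)"
  define \<delta>1 where "\<delta>1 = block_p_RIC m n d p A (a*k)"
  define \<delta>2 where "\<delta>2 = block_p_RIC m n d p A ((a+1)*k)"
  have d10: "0 \<le> \<delta>1" using RIC_props[OF hp, of m n d A "a*k"] by (simp add: \<delta>1_def)
  have d20: "0 \<le> \<delta>2" using RIC_props[OF hp, of m n d A "(a+1)*k"] by (simp add: \<delta>2_def)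
  have H: "\<delta>1 + real a powr (1 - p/2) / \<gamma> * \<delta>2 < real a powr (1 - p/2) / \<gamma> - 1"
    using hRIP by (simp add: Let_def \<gamma>_def \<delta>1_def \<delta>2_def)
  have \<gamma>0: "0 \<le> \<gamma>" using h\<omega> by (simp add: \<gamma>_def)
  have \<gamma>p: "0 < \<gamma>"
  proof (rule ccontr)
    assume "\<not> 0 < \<gamma>"
    then have "\<gamma> = 0" using \<gamma>0 by simp
    then show False using H d10 by simp
  qed
  have apos: "0 < real a" using ha by simp
  define t where "t = \<gamma> * real a powr (p/2 - 1)"
  have tp: "0 < t" using \<gamma>p apos by (simp add: t_def)
  have ct: "real a powr (1 - p/2) / \<gamma> * t = 1"
  proof -
    have "real a powr (1 - p/2) * real a powr (p/2 - 1) = 1" using apos by (simp add: powr_add[symmetric])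
    then show ?thesis using \<gamma>p by (simp add: t_def field_simps)
  qed
  define \<kappa> where "\<kappa> = 1 - \<delta>2 - (1 + \<delta>1) * \<gamma> * real a powr (p/2 - 1)"
  have \<kappa>p: "0 < \<kappa>"
  proof -
    have "(\<delta>1 + real a powr (1 - p/2) / \<gamma> * \<delta>2) * t < (real a powr (1 - p/2) / \<gamma> - 1) * t"
      using H tp by (intro mult_strict_right_mono) auto
    then have "\<delta>1 * t + \<delta>2 * (real a powr (1 - p/2) / \<gamma> * t) < real a powr (1 - p/2) / \<gamma> * t - t"
      by (simp add: algebra_simps)
    then have "\<delta>1 * t + \<delta>2 < 1 - t" by (simp only: ct mult_1_right)
    then show ?thesis by (simp add: \<kappa>_def t_def algebra_simps)
  qed
  define c1 where "c1 = (1 + \<gamma> * real a powr (p/2 - 1)) * real m powr (1 - p/2) * 2 powr p / \<kappa>"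
  define c2 where "c2 = (1 + \<gamma> * real a powr (p/2 - 1)) * 2 * (1 + \<delta>1) * real (a*k) powr (p/2 - 1) / \<kappa>
        + 2 * real (a*k) powr (p/2 - 1)"
  have c10: "0 \<le> c1" using \<kappa>p \<gamma>0 by (simp add: c1_def)
  have c20: "0 \<le> c2" using \<kappa>p \<gamma>0 d10 by (simp add: c2_def)
  define C1 where "C1 = 2 powr (1/p) * (c2 + 1) powr (1/p) * real k powr (1/p - 1/2)"
  define C2 where "C2 = 2 powr (1/p) * (c1 + 1) powr (1/p)"
  have kpos: "0 < real k" using hk by simp
  have C1p: "0 < C1" using c20 kpos by (simp add: C1_def)
  have C2p: "0 < C2" using c10 by (simp add: C2_def)
  have key: "\<forall>x e \<epsilon> xk T0 Tt xs.
      norm2 m e \<le> \<epsilon>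
      \<and> block_sparse n d k xk
      \<and> (\<forall>g. block_sparse n d k g \<longrightarrow>
            mixed_norm n d 1 (\<lambda>j. x j - xk j) \<le> mixed_norm n d 1 (\<lambda>j. x j - g j))
      \<and> T0 = block_support n d xk
      \<and> Tt \<subseteq> {..<n}
      \<and> real (card Tt) = \<rho> * real k
      \<and> real (card (Tt \<inter> T0)) = \<alpha> * \<rho> * real k
      \<and> norm2 m (\<lambda>i. mat_vec (n*d) A x i + e i - mat_vec (n*d) A xs i) \<le> \<epsilon>
      \<and> (\<forall>z. norm2 m (\<lambda>i. mat_vec (n*d) A x i + e i - mat_vec (n*d) A z i) \<le> \<epsilon> \<longrightarrow>
            weighted_obj n d p \<omega> Tt xs \<le> weighted_obj n d p \<omega> Tt z)
      \<longrightarrow> norm2 (n*d) (\<lambda>j. xs j - x j)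
          \<le> C1 * (\<omega> * mixed_norm n d p (\<lambda>j. x j - xk j) powr p
                  + (1 - \<omega>) * mixed_norm n d p (restrict_blocks d (- Tt \<inter> - T0) x) powr p) powr (1/p)
              / real k powr (1/p - 1/2)
            + C2 * \<epsilon>"
  proof (intro allI impI)
    fix x e \<epsilon> xk T0 Tt xs
    assume asm: "norm2 m e \<le> \<epsilon>
      \<and> block_sparse n d k xk
      \<and> (\<forall>g. block_sparse n d k g \<longrightarrow>
            mixed_norm n d 1 (\<lambda>j. x j - xk j) \<le> mixed_norm n d 1 (\<lambda>j. x j - g j))
      \<and> T0 = block_support n d xk
      \<and> Tt \<subseteq> {..<n}
      \<and> real (card Tt) = \<rho> * real k
      \<and> real (card (Tt \<inter> T0)) = \<alpha> * \<rho> * real k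
      \<and> norm2 m (\<lambda>i. mat_vec (n*d) A x i + e i - mat_vec (n*d) A xs i) \<le> \<epsilon>
      \<and> (\<forall>z. norm2 m (\<lambda>i. mat_vec (n*d) A x i + e i - mat_vec (n*d) A z i) \<le> \<epsilon> \<longrightarrow>
            weighted_obj n d p \<omega> Tt xs \<le> weighted_obj n d p \<omega> Tt z)"
    define R where "R = \<omega> * mixed_norm n d p (\<lambda>j. x j - xk j) powr p
                  + (1 - \<omega>) * mixed_norm n d p (restrict_blocks d (- Tt \<inter> - T0) x) powr p"
    have R0: "0 \<le> R" using h\<omega> by (simp add: R_def)
    have eps0: "0 \<le> \<epsilon>" using asm norm2_nonneg order_trans by blast
    have RHS0: "0 \<le> C1 * R powr (1/p) / real k powr (1/p - 1/2)" using C1p by simp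
    define nh where "nh = norm2 (n*d) (\<lambda>j. xs j - x j)"
    have nh0: "0 \<le> nh" by (simp add: nh_def norm2_nonneg)
    have "nh \<le> C1 * R powr (1/p) / real k powr (1/p - 1/2) + C2 * \<epsilon>"
    proof (cases "d = 0")
      case True
      then have "nh = 0" by (simp add: nh_def norm2_def)
      then show ?thesis using RHS0 C2p eps0 by simp
    next
      case False
      then have hd: "0 < d" by simp
      have cr: "nh powr p \<le> c1 * \<epsilon> powr p + c2 * R"
        unfolding nh_def c1_def c2_def R_def
        by (rule core[OF hp h\<omega> hk ha hd \<gamma>_def \<delta>1_def \<delta>2_def \<kappa>_def \<kappa>p]) (use asm in auto)
      have "nh = (nh powr p) powr (1/p)" using nh0 hp by (simp add: powr_powr)
      also have "\<dots> \<le> (c1 * \<epsilon> powr p + c2 * R) powr (1/p)"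
        using cr hp by (intro powr_mono2) auto
      also have "\<dots> \<le> 2 powr (1/p) * ((c1 * \<epsilon> powr p) powr (1/p) + (c2 * R) powr (1/p))"
        using hp c10 c20 R0 by (intro pow_split) auto
      also have "(c1 * \<epsilon> powr p) powr (1/p) = c1 powr (1/p) * \<epsilon>"
        using c10 eps0 hp by (simp add: powr_mult powr_powr)
      also have "(c2 * R) powr (1/p) = c2 powr (1/p) * R powr (1/p)"
        using c20 R0 by (simp add: powr_mult)
      also have "2 powr (1/p) * (c1 powr (1/p) * \<epsilon> + c2 powr (1/p) * R powr (1/p))
          \<le> 2 powr (1/p) * ((c1 + 1) powr (1/p) * \<epsilon> + (c2 + 1) powr (1/p) * R powr (1/p))"
        using c10 c20 hp eps0 by (intro mult_left_mono add_mono mult_right_mono powr_mono2) auto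
      also have "\<dots> = C1 * R powr (1/p) / real k powr (1/p - 1/2) + C2 * \<epsilon>"
        using kpos by (simp add: C1_def C2_def field_simps)
      finally show ?thesis .
    qed
    then show "norm2 (n*d) (\<lambda>j. xs j - x j) \<le> C1 * (\<omega> * mixed_norm n d p (\<lambda>j. x j - xk j) powr p + (1 - \<omega>) * mixed_norm n d p (restrict_blocks d (- Tt \<inter> - T0) x) powr p) powr (1/p) / real k powr (1/p - 1/2) + C2 * \<epsilon>" by (simp only: nh_def R_def)
  qed
  show ?thesis using key C1p C2p by blast
qed

end
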